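(* For every $P\in\mathbb{R}[X,Y]$ with $P(X,Y)=-P(Y,X)$, one has $\kappa(l_P)=l_Q$ where $Q(X,Y)=P(X,Y)-P(-X-Y,Y)+P(-X-Y,X)$.
   Context: $A=\mathbb{R}\langle x,y\rangle$; $L\subset A$ the free Lie algebra on $x,y$; $\operatorname{ad}_y(l)=[y,l]$. For $P=\sum c_{i,j}X^iY^j$ set $l_P=\sum c_{i,j}[\operatorname{ad}_y^i(x),\operatorname{ad}_y^j(x)]\in L$ (this identifies antisymmetric polynomials, $P(X,Y)=-P(Y,X)$, with the $x$-degree-$2$ part of $L$). $\operatorname{tr}$ is the projection $A\to A/\operatorname{span}\{ab-ba\}$, and $\partial_x:A/\operatorname{span}\{ab-ba\}\to A$ is $\operatorname{tr}(a_1\cdots a_n)\mapsto\sum_{i:\,a_i=x}a_{i+1}\cdots a_n a_1\cdots a_{i-1}$. The operator $\kappa:L\to L$ is $\kappa(l)=\partial_x(\operatorname{tr}(x\,l))$. *)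

theory Defs
  imports "HOL-Computational_Algebra.Polynomial" "HOL-Library.Function_Algebras"
begin

datatype gen = GX | GY

text \<open>Elements of A are coefficient functions on words (finitely supported ones
are the genuine elements; all constructions below preserve finite support).\<close>
type_synonym ncp = "gen list \<Rightarrow> real"

definition gx :: ncp where "gx = (\<lambda>w. if w = [GX] then 1 else 0)"
definition gy :: ncp where "gy = (\<lambda>w. if w = [GY] then 1 else 0)"

definition ncmul :: "ncp \<Rightarrow> ncp \<Rightarrow> ncp" where
  "ncmul a b = (\<lambda>w. \<Sum>i\<le>length w. a (take i w) * b (drop i w))"

definition bracket :: "ncp \<Rightarrow> ncp \<Rightarrow> ncp" where
  "bracket a b = ncmul a b - ncmul b a"

definition adypow :: "nat \<Rightarrow> ncp \<Rightarrow> ncp" where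
  "adypow i a = ((\<lambda>l. bracket gy l) ^^ i) a"

section \<open>Polynomials in two commuting variables: R[X,Y] = (R[X])[Y]\<close>

type_synonym bipoly = "real poly poly"

definition bcoeff :: "bipoly \<Rightarrow> nat \<Rightarrow> nat \<Rightarrow> real" where
  "bcoeff P i j = coeff (coeff P j) i"

definition Xb :: bipoly where "Xb = [:[:0, 1:]:]"
definition Yb :: bipoly where "Yb = [:0, 1:]"

text \<open>Substitution: bsubst P f g = P(f, g).\<close>
definition bsubst :: "bipoly \<Rightarrow> bipoly \<Rightarrow> bipoly \<Rightarrow> bipoly" where
  "bsubst P f g = (\<Sum>j\<le>degree P. poly (map_poly (\<lambda>a. [:[:a:]:]) (coeff P j)) f * g ^ j)"

definition lP :: "bipoly \<Rightarrow> ncp" where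
  "lP P = (\<Sum>j\<le>degree P. \<Sum>i\<le>degree (coeff P j).
            (\<lambda>w. bcoeff P i j * bracket (adypow i gx) (adypow j gx) w))"

text \<open>dx_tr is the composite of the trace projection tr : A \<rightarrow> A/[A,A] with
the cyclic derivative d_x, written out on A as the linear extension of
  a_1...a_n \<mapsto> sum over i with a_i = x of a_{i+1}...a_n a_1...a_{i-1}.\<close>
definition dx_tr :: "ncp \<Rightarrow> ncp" where
  "dx_tr a = (\<lambda>v. \<Sum>w\<in>{w. length w = Suc (length v)}.
      a w * (\<Sum>i<length w. if w ! i = GX \<and> drop (Suc i) w @ take i w = v then 1 else 0))"

definition kappa :: "ncp \<Rightarrow> ncp" where
  "kappa l = dx_tr (ncmul gx l)"

end

theory Submission
  imports Defs
begin


lemma sum_fun_apply: "(sum f A) x = sum (\<lambda>a. f a x) A"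
  by (induction A rule: infinite_finite_induct) auto

definition S2 :: "(gen list \<Rightarrow> gen list \<Rightarrow> real) \<Rightarrow> gen list \<Rightarrow> real" where
  "S2 g v = (\<Sum>i\<le>length v. g (take i v) (drop i v))"

lemma ncmul_S2: "ncmul a b v = S2 (\<lambda>p q. a p * b q) v"
  by (simp add: ncmul_def S2_def)

lemma S2_add: "S2 (\<lambda>p q. f p q + g p q) = (\<lambda>v. S2 f v + S2 g v)"
  by (simp add: S2_def sum.distrib fun_eq_iff)
lemma S2_diff: "S2 (\<lambda>p q. f p q - g p q) = (\<lambda>v. S2 f v - S2 g v)"
  by (simp add: S2_def sum_subtractf fun_eq_iff)
lemma S2_zero: "(\<And>p q. f p q = 0) \<Longrightarrow> S2 f v = 0"
  by (simp add: S2_def)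
lemma S2_mult_right: "S2 f v * c = S2 (\<lambda>p q. f p q * c) v"
  by (simp add: S2_def sum_distrib_right)
lemma S2_mult_left: "c * S2 f v = S2 (\<lambda>p q. c * f p q) v"
  by (simp add: S2_def sum_distrib_left)
lemma S2_swap: "S2 (\<lambda>a b. S2 (\<lambda>c d. f a b c d) y) x = S2 (\<lambda>c d. S2 (\<lambda>a b. f a b c d) x) y"
  unfolding S2_def by (rule sum.swap)
lemma S2_cong: "(\<And>p q. p @ q = v \<Longrightarrow> f p q = g p q) \<Longrightarrow> S2 f v = S2 g v"
  unfolding S2_def by (intro sum.cong) auto

lemma tri_split:
  "S2 (\<lambda>p r. S2 (\<lambda>m s. f p m s) r) v = S2 (\<lambda>q s. S2 (\<lambda>p m. f p m s) q) v"
proof -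
  define n where "n = length v"
  have "S2 (\<lambda>p r. S2 (\<lambda>m s. f p m s) r) v =
     (\<Sum>i\<le>n. \<Sum>j\<in>{i..n}. f (take i v) (drop i (take j v)) (drop j v))"
  proof -
  have inner: "(\<Sum>k\<le>length (drop i v). f (take i v) (take k (drop i v)) (drop k (drop i v)))
       = (\<Sum>j\<in>{i..n}. f (take i v) (drop i (take j v)) (drop j v))" if i: "i \<le> n" for i
  proof -
    have "(\<Sum>k\<le>length (drop i v). f (take i v) (take k (drop i v)) (drop k (drop i v)))
       = (\<Sum>k=0..n-i. f (take i v) (drop i (take (k+i) v)) (drop (k+i) v))"
      using i by (intro sum.cong) (auto simp: n_def take_drop add.commute)
    also have "\<dots> = (\<Sum>j\<in>{i..n}. f (take i v) (drop i (take j v)) (drop j v))"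
      using sum.shift_bounds_cl_nat_ivl[of "\<lambda>j. f (take i v) (drop i (take j v)) (drop j v)" 0 i "n-i"] i
      by simp
    finally show ?thesis .
  qed
  show ?thesis unfolding S2_def n_def[symmetric]
    by (rule sum.cong[OF refl]) (rule inner, simp)
  qed
  also have "\<dots> = (\<Sum>j\<le>n. \<Sum>i\<le>j. f (take i v) (drop i (take j v)) (drop j v))"
  proof -
    have "(\<Sum>i\<le>n. \<Sum>j\<in>{i..n}. f (take i v) (drop i (take j v)) (drop j v))
       = (\<Sum>i\<le>n. \<Sum>j\<in>{j\<in>{..n}. i \<le> j}. f (take i v) (drop i (take j v)) (drop j v))"
      by (intro sum.cong) auto
    also have "\<dots> = (\<Sum>j\<le>n. \<Sum>i\<in>{i\<in>{..n}. i \<le> j}. f (take i v) (drop i (take j v)) (drop j v))"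
      by (rule sum.swap_restrict) auto
    also have "\<dots> = (\<Sum>j\<le>n. \<Sum>i\<le>j. f (take i v) (drop i (take j v)) (drop j v))"
      by (intro sum.cong) auto
    finally show ?thesis .
  qed
  also have "\<dots> = S2 (\<lambda>q s. S2 (\<lambda>p m. f p m s) q) v"
    unfolding S2_def n_def
  proof (rule sum.cong[OF refl])
    fix j assume "j \<in> {..length v}"
    then have "length (take j v) = j" by auto
    then show "(\<Sum>i\<le>j. f (take i v) (drop i (take j v)) (drop j v)) =
      (\<Sum>i\<le>length (take j v). f (take i (take j v)) (drop i (take j v)) (drop j v))"
      by (intro sum.cong) (auto simp: min_def)
  qed
  finally show ?thesis .
qed

lemma S2_split_mid:
  "S2 g (p @ x # q) = (\<Sum>i\<le>length p. g (take i p) (drop i p @ x # q))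
     + (\<Sum>k\<le>length q. g (p @ x # take k q) (drop k q))"
proof -
  have U: "{..length (p @ x # q)} = {..length p} \<union> {Suc (length p)..Suc (length p) + length q}"
    by auto
  have "S2 g (p @ x # q) = (\<Sum>i\<le>length p. g (take i (p @ x # q)) (drop i (p @ x # q)))
     + (\<Sum>i\<in>{Suc (length p)..Suc (length p) + length q}. g (take i (p @ x # q)) (drop i (p @ x # q)))"
    unfolding S2_def U by (rule sum.union_disjoint) auto
  also have "(\<Sum>i\<le>length p. g (take i (p @ x # q)) (drop i (p @ x # q)))
     = (\<Sum>i\<le>length p. g (take i p) (drop i p @ x # q))"
    by (intro sum.cong) auto
  also have "(\<Sum>i\<in>{Suc (length p)..Suc (length p) + length q}. g (take i (p @ x # q)) (drop i (p @ x # q)))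
     = (\<Sum>k=0..length q. g (take (k + Suc (length p)) (p @ x # q)) (drop (k + Suc (length p)) (p @ x # q)))"
    using sum.shift_bounds_cl_nat_ivl[of "\<lambda>i. g (take i (p @ x # q)) (drop i (p @ x # q))" 0 "Suc (length p)" "length q"]
    by (simp add: add.commute)
  also have "\<dots> = (\<Sum>k\<le>length q. g (p @ x # take k q) (drop k q))"
    by (intro sum.cong) auto
  finally show ?thesis .
qed


lemma rot_iff:
  assumes "length w = Suc n" "i \<le> n" "length v = n"
  shows "(w ! i = GX \<and> drop (Suc i) w @ take i w = v) \<longleftrightarrow> w = drop (n-i) v @ GX # take (n-i) v"
proof
  assume h: "w ! i = GX \<and> drop (Suc i) w @ take i w = v"
  have w: "w = take i w @ w ! i # drop (Suc i) w" using assms by (simp add: id_take_nth_drop)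
  have "take (n-i) v = drop (Suc i) w" "drop (n-i) v = take i w" using h assms by auto
  then show "w = drop (n-i) v @ GX # take (n-i) v" using w h by simp
next
  assume h: "w = drop (n-i) v @ GX # take (n-i) v"
  show "w ! i = GX \<and> drop (Suc i) w @ take i w = v" using assms h by (simp add: nth_append)
qed

lemma UNIV_gen: "(UNIV :: gen set) = {GX, GY}"
  using gen.exhaust by auto

lemma finite_W: "finite {w :: gen list. length w = m}"
proof -
  have "{w :: gen list. length w = m} = {xs. set xs \<subseteq> {GX,GY} \<and> length xs = m}"
    using UNIV_gen by auto
  then show ?thesis using finite_lists_length_eq[of "{GX,GY}" m] by simp
qed

lemma dx_tr_alt: "dx_tr a v = S2 (\<lambda>q p. a (p @ GX # q)) v"
proof -
  define n where "n = length v"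
  define W where "W = {w :: gen list. length w = Suc n}"
  have fW: "finite W" unfolding W_def by (rule finite_W)
  have "dx_tr a v = (\<Sum>w\<in>W. \<Sum>i<Suc n. a w * (if w ! i = GX \<and> drop (Suc i) w @ take i w = v then 1 else 0))"
    unfolding dx_tr_def n_def[symmetric] W_def[symmetric]
  proof (rule sum.cong[OF refl])
    fix w assume "w \<in> W"
    then have "length w = Suc n" by (simp add: W_def)
    then show "a w * (\<Sum>i<length w. if w ! i = GX \<and> drop (Suc i) w @ take i w = v then 1 else 0) =
      (\<Sum>i<Suc n. a w * (if w ! i = GX \<and> drop (Suc i) w @ take i w = v then 1 else 0))"
      by (simp only: sum_distrib_left)
  qed
  also have "\<dots> = (\<Sum>i<Suc n. \<Sum>w\<in>W. a w * (if w ! i = GX \<and> drop (Suc i) w @ take i w = v then 1 else 0))"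
    by (rule sum.swap)
  also have "\<dots> = (\<Sum>i<Suc n. a (drop (n-i) v @ GX # take (n-i) v))"
  proof (rule sum.cong[OF refl])
    fix i assume i: "i \<in> {..<Suc n}"
    have "(\<Sum>w\<in>W. a w * (if w ! i = GX \<and> drop (Suc i) w @ take i w = v then 1 else 0))
        = (\<Sum>w\<in>W. if w = drop (n-i) v @ GX # take (n-i) v then a w else 0)"
      proof (rule sum.cong[OF refl])
        fix w assume "w \<in> W"
        then have "length w = Suc n" by (simp add: W_def)
        then have "(w ! i = GX \<and> drop (Suc i) w @ take i w = v) \<longleftrightarrow> w = drop (n-i) v @ GX # take (n-i) v"
          using rot_iff[OF \<open>length w = Suc n\<close> _ n_def[symmetric]] i by simp
        then show "a w * (if w ! i = GX \<and> drop (Suc i) w @ take i w = v then 1 else 0)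
           = (if w = drop (n-i) v @ GX # take (n-i) v then a w else 0)" by simp
      qed
    also have "\<dots> = a (drop (n-i) v @ GX # take (n-i) v)"
      using fW i by (simp add: W_def n_def)
    finally show "(\<Sum>w\<in>W. a w * (if w ! i = GX \<and> drop (Suc i) w @ take i w = v then 1 else 0))
        = a (drop (n-i) v @ GX # take (n-i) v)" .
  qed
  also have "\<dots> = (\<Sum>k<Suc n. a (drop k v @ GX # take k v))"
    using sum.nat_diff_reindex[of "\<lambda>k. a (drop k v @ GX # take k v)" "Suc n"] by simp
  also have "\<dots> = S2 (\<lambda>q p. a (p @ GX # q)) v"
    unfolding S2_def n_def by (intro sum.cong) auto
  finally show ?thesis .
qed

definition J :: "ncp \<Rightarrow> ncp \<Rightarrow> ncp" where
  "J a c = (\<lambda>v. S2 (\<lambda>q r. S2 (\<lambda>m p. a (p @ GX # q) * c m) r) v)"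

lemma ncmul_mid: "ncmul a b (p @ x # q) = S2 (\<lambda>s t. a s * b (t @ x # q)) p + S2 (\<lambda>s t. a (p @ x # s) * b t) q"
  unfolding ncmul_S2 S2_split_mid by (simp add: S2_def)

lemma dx_tr_ncmul: "dx_tr (ncmul a b) = J a b + J b a"
proof
  fix v
  have "dx_tr (ncmul a b) v = S2 (\<lambda>q p. S2 (\<lambda>s t. a s * b (t @ GX # q)) p) v
     + S2 (\<lambda>q p. S2 (\<lambda>s t. a (p @ GX # s) * b t) q) v"
    unfolding dx_tr_alt ncmul_mid S2_add by simp
  also have "S2 (\<lambda>q p. S2 (\<lambda>s t. a s * b (t @ GX # q)) p) v = J b a v"
    unfolding J_def by (simp add: mult.commute)
  also have "S2 (\<lambda>q p. S2 (\<lambda>s t. a (p @ GX # s) * b t) q) v = J a b v"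
    unfolding J_def by (rule tri_split[symmetric])
  finally show "dx_tr (ncmul a b) v = (J a b + J b a) v" by simp
qed



lemma J_ncmul: "J (ncmul u w) c = J u (ncmul w c) + J w (ncmul c u)"
proof
  fix v
  have A: "S2 (\<lambda>m p. S2 (\<lambda>s t. u s * w (t @ GX # q)) p * c m) r
        = S2 (\<lambda>M t. w (t @ GX # q) * ncmul c u M) r" for q r
  proof -
    have "S2 (\<lambda>m p. S2 (\<lambda>s t. u s * w (t @ GX # q)) p * c m) r
        = S2 (\<lambda>m p. S2 (\<lambda>s t. c m * u s * w (t @ GX # q)) p) r"
      by (simp only: S2_mult_right) (simp add: mult_ac)
    also have "\<dots> = S2 (\<lambda>M t. S2 (\<lambda>m s. c m * u s * w (t @ GX # q)) M) r"
      by (rule tri_split)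
    also have "\<dots> = S2 (\<lambda>M t. w (t @ GX # q) * ncmul c u M) r"
      by (simp add: ncmul_S2 S2_mult_left mult.commute mult.left_commute)
    finally show ?thesis .
  qed
  define G where "G s t r = S2 (\<lambda>m p. u (p @ GX # s) * w t * c m) r" for s t r
  have B1: "S2 (\<lambda>m p. S2 (\<lambda>s t. u (p @ GX # s) * w t) q * c m) r
        = S2 (\<lambda>s t. G s t r) q" for q r
  proof -
    have "S2 (\<lambda>m p. S2 (\<lambda>s t. u (p @ GX # s) * w t) q * c m) r
        = S2 (\<lambda>m p. S2 (\<lambda>s t. u (p @ GX # s) * w t * c m) q) r"
      by (simp add: S2_mult_right)
    also have "\<dots> = S2 (\<lambda>s t. G s t r) q"
      unfolding G_def by (rule S2_swap)
    finally show ?thesis .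
  qed
  have B2: "S2 (\<lambda>q r. S2 (\<lambda>s t. G s t r) q) v = S2 (\<lambda>s R. S2 (\<lambda>t r. G s t r) R) v"
    by (rule tri_split[symmetric])
  have B3: "S2 (\<lambda>t r. G s t r) R = S2 (\<lambda>M p. u (p @ GX # s) * ncmul w c M) R" for s R
  proof -
    have "S2 (\<lambda>t r. G s t r) R = S2 (\<lambda>t r. S2 (\<lambda>m p. u (p @ GX # s) * w t * c m) r) R"
      unfolding G_def ..
    also have "\<dots> = S2 (\<lambda>M p. S2 (\<lambda>t m. u (p @ GX # s) * w t * c m) M) R"
      by (rule tri_split)
    also have "\<dots> = S2 (\<lambda>M p. u (p @ GX # s) * ncmul w c M) R"
      by (simp add: ncmul_S2 S2_mult_left mult.assoc)
    finally show ?thesis .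
  qed
  have "J (ncmul u w) c v = S2 (\<lambda>q r. S2 (\<lambda>m p. S2 (\<lambda>s t. u s * w (t @ GX # q)) p * c m) r) v
      + S2 (\<lambda>q r. S2 (\<lambda>m p. S2 (\<lambda>s t. u (p @ GX # s) * w t) q * c m) r) v"
    unfolding J_def ncmul_mid by (simp add: distrib_right S2_add)
  also have "S2 (\<lambda>q r. S2 (\<lambda>m p. S2 (\<lambda>s t. u s * w (t @ GX # q)) p * c m) r) v = J w (ncmul c u) v"
    unfolding J_def A ..
  also have "S2 (\<lambda>q r. S2 (\<lambda>m p. S2 (\<lambda>s t. u (p @ GX # s) * w t) q * c m) r) v = J u (ncmul w c) v"
    unfolding J_def B1 B2 B3 ..
  finally show "J (ncmul u w) c v = (J u (ncmul w c) + J w (ncmul c u)) v" by simp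
qed

lemma S2_last: "S2 (\<lambda>a b. if b = [] then h a else 0) v = h v"
proof -
  have "S2 (\<lambda>a b. if b = [] then h a else 0) v = (\<Sum>i\<le>length v. if i = length v then h v else 0)"
    unfolding S2_def by (intro sum.cong) auto
  then show ?thesis by simp
qed

lemma S2_first: "S2 (\<lambda>a b. if a = [] then h b else 0) v = h v"
proof -
  have "S2 (\<lambda>a b. if a = [] then h b else 0) v = (\<Sum>i\<le>length v. if i = 0 then h v else 0)"
    unfolding S2_def by (intro sum.cong) auto
  then show ?thesis by simp
qed

lemma mid_GX: "p @ GX # q = [GX] \<longleftrightarrow> p = [] \<and> q = []"
  by (cases p) auto

lemma J_gx: "J gx c = c"
proof
  fix v
  have "J gx c v = S2 (\<lambda>q r. if q = [] then S2 (\<lambda>m p. if p = [] then c m else 0) r else 0) v"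
    unfolding J_def gx_def
  proof (intro S2_cong)
    fix q r
    show "S2 (\<lambda>m p. (if p @ GX # q = [GX] then 1 else 0) * c m) r =
      (if q = [] then S2 (\<lambda>m p. if p = [] then c m else 0) r else 0)"
    proof (cases "q = []")
      case True
      then show ?thesis by (auto simp: mid_GX intro!: S2_cong)
    next
      case False
      then show ?thesis by (auto simp: mid_GX intro!: S2_zero)
    qed
  qed
  also have "\<dots> = c v" by (simp add: S2_first S2_last)
  finally show "J gx c v = c v" .
qed

lemma J_gy: "J gy c = 0"
proof
  fix v
  have "\<And>p q. p @ GX # q \<noteq> [GY]" by (case_tac p) auto
  then show "J gy c v = 0 v" unfolding J_def gy_def by (simp add: S2_def)
qed

lemma J_diff1: "J (a - b) c = J a c - J b c"
  unfolding J_def by (rule ext) (simp add: left_diff_distrib S2_diff)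
lemma J_diff2: "J a (c - d) = J a c - J a d"
  unfolding J_def by (rule ext) (simp add: right_diff_distrib S2_diff)

lemma ncmul_diff_left: "ncmul (a - b) c = ncmul a c - ncmul b c"
  unfolding ncmul_def by (auto simp: left_diff_distrib sum_subtractf)
lemma ncmul_diff_right: "ncmul c (a - b) = ncmul c a - ncmul c b"
  unfolding ncmul_def by (auto simp: right_diff_distrib sum_subtractf)
lemma ncmul_add_left: "ncmul (a + b) c = ncmul a c + ncmul b c"
  unfolding ncmul_def by (auto simp: distrib_right sum.distrib)
lemma ncmul_add_right: "ncmul c (a + b) = ncmul c a + ncmul c b"
  unfolding ncmul_def by (auto simp: distrib_left sum.distrib)

lemma ncmul_assoc: "ncmul (ncmul a b) c = ncmul a (ncmul b c)"
proof
  fix v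
  have "ncmul (ncmul a b) c v = S2 (\<lambda>q s. S2 (\<lambda>p m. a p * b m * c s) q) v"
    by (simp add: ncmul_S2 S2_mult_right)
  also have "\<dots> = S2 (\<lambda>p r. S2 (\<lambda>m s. a p * b m * c s) r) v"
    by (rule tri_split[symmetric])
  also have "\<dots> = ncmul a (ncmul b c) v"
    by (simp add: ncmul_S2 S2_mult_left mult.assoc)
  finally show "ncmul (ncmul a b) c v = ncmul a (ncmul b c) v" .
qed



abbreviation aa :: "nat \<Rightarrow> ncp" where "aa i \<equiv> adypow i gx"
definition Dop :: "ncp \<Rightarrow> ncp" where "Dop z = bracket z gy"
definition BB :: "nat \<Rightarrow> nat \<Rightarrow> ncp" where "BB i j = bracket (aa i) (aa j)"
definition sc :: "real \<Rightarrow> ncp \<Rightarrow> ncp" where "sc c z = (\<lambda>w. c * z w)"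

lemma adypow_Suc: "adypow (Suc i) z = bracket gy (adypow i z)"
  by (simp add: adypow_def)
lemma adypow_0: "adypow 0 z = z"
  by (simp add: adypow_def)

lemma ncmul_minus_left: "ncmul (- a) b = - ncmul a b"
  unfolding ncmul_def by (auto simp: sum_negf)
lemma ncmul_minus_right: "ncmul b (- a) = - ncmul b a"
  unfolding ncmul_def by (auto simp: sum_negf)
lemma ncmul_sc_left: "ncmul (sc c a) b = sc c (ncmul a b)"
  unfolding ncmul_def sc_def by (auto simp: sum_distrib_left mult.assoc)
lemma ncmul_sc_right: "ncmul b (sc c a) = sc c (ncmul b a)"
  unfolding ncmul_def sc_def by (auto simp: sum_distrib_left mult_ac)
lemma ncmul_zero_left: "ncmul 0 b = 0"
  unfolding ncmul_def by (auto simp: fun_eq_iff)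
lemma ncmul_zero_right: "ncmul b 0 = 0"
  unfolding ncmul_def by (auto simp: fun_eq_iff)

lemmas ncmul_lin = ncmul_diff_left ncmul_diff_right ncmul_add_left ncmul_add_right
  ncmul_minus_left ncmul_minus_right ncmul_sc_left ncmul_sc_right ncmul_zero_left ncmul_zero_right

lemma bracket_anti: "bracket a b = - bracket b a"
  unfolding bracket_def by simp

lemma sc_add: "sc c (a + b) = sc c a + sc c b"
  unfolding sc_def by (auto simp: fun_eq_iff distrib_left)
lemma sc_diff: "sc c (a - b) = sc c a - sc c b"
  unfolding sc_def by (auto simp: fun_eq_iff right_diff_distrib)
lemma sc_minus: "sc c (- a) = - sc c a"
  unfolding sc_def by (auto simp: fun_eq_iff)

lemma Dop_diff: "Dop (a - b) = Dop a - Dop b"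
  unfolding Dop_def bracket_def by (simp add: ncmul_lin)
lemma Dop_add: "Dop (a + b) = Dop a + Dop b"
  unfolding Dop_def bracket_def by (simp add: ncmul_lin)
lemma Dop_minus: "Dop (- a) = - Dop a"
  unfolding Dop_def bracket_def by (simp add: ncmul_lin)
lemma Dop_sc: "Dop (sc c a) = sc c (Dop a)"
  unfolding Dop_def bracket_def by (simp add: ncmul_lin sc_diff)

lemma Dpow_diff: "(Dop ^^ n) (a - b) = (Dop ^^ n) a - (Dop ^^ n) b"
  by (induction n) (simp_all only: funpow.simps o_apply id_apply Dop_diff)
lemma Dpow_minus: "(Dop ^^ n) (- a) = - (Dop ^^ n) a"
  by (induction n) (simp_all only: funpow.simps o_apply id_apply Dop_minus)

lemma J_aa: "J (aa i) c = (Dop ^^ i) c"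
proof (induction i arbitrary: c)
  case 0
  then show ?case by (simp add: adypow_0 J_gx)
next
  case (Suc i)
  have "J (aa (Suc i)) c = J (ncmul gy (aa i)) c - J (ncmul (aa i) gy) c"
    by (simp add: adypow_Suc bracket_def J_diff1)
  also have "\<dots> = J (aa i) (ncmul c gy) - J (aa i) (ncmul gy c)"
    by (simp add: J_ncmul J_gy)
  also have "\<dots> = J (aa i) (Dop c)"
    by (simp add: J_diff2 Dop_def bracket_def)
  also have "\<dots> = (Dop ^^ Suc i) c"
    by (simp add: Suc.IH funpow_swap1)
  finally show ?case .
qed

lemma dx_tr_diff: "dx_tr (a - b) = dx_tr a - dx_tr b"
  by (rule ext) (simp add: dx_tr_alt S2_diff)

lemma dx_tr_x_prod: "dx_tr (ncmul gx (ncmul u w)) = ncmul u w + J u (ncmul w gx) + J w (ncmul gx u)"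
  by (simp add: dx_tr_ncmul J_gx J_ncmul)

lemma kappa_BB: "kappa (BB i j) = BB i j + (Dop ^^ i) (BB j 0) - (Dop ^^ j) (BB i 0)"
proof -
  have "kappa (BB i j) = dx_tr (ncmul gx (ncmul (aa i) (aa j))) - dx_tr (ncmul gx (ncmul (aa j) (aa i)))"
    by (simp add: kappa_def BB_def bracket_def ncmul_diff_right dx_tr_diff)
  also have "\<dots> = BB i j + J (aa i) (BB j 0) + J (aa j) (BB 0 i)"
    unfolding dx_tr_x_prod BB_def bracket_def adypow_0 J_diff2 by simp
  also have "\<dots> = BB i j + (Dop ^^ i) (BB j 0) - (Dop ^^ j) (BB i 0)"
    by (simp add: J_aa bracket_anti[of "aa 0" "aa i"] BB_def Dpow_minus)
  finally show ?thesis .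
qed

lemma ad_bracket: "bracket gy (bracket u v) = bracket (bracket gy u) v + bracket u (bracket gy v)"
  unfolding bracket_def by (simp add: ncmul_lin ncmul_assoc algebra_simps)

lemma ad_BB: "bracket gy (BB i j) = BB (Suc i) j + BB i (Suc j)"
  by (simp add: BB_def ad_bracket adypow_Suc)



definition bnd :: "bipoly \<Rightarrow> nat \<Rightarrow> bool" where
  "bnd R N \<longleftrightarrow> (\<forall>i j. bcoeff R i j \<noteq> 0 \<longrightarrow> i \<le> N \<and> j \<le> N)"

lemma bcoeff_add: "bcoeff (R + S) i j = bcoeff R i j + bcoeff S i j"
  by (simp add: bcoeff_def)
lemma bcoeff_minus: "bcoeff (- R) i j = - bcoeff R i j"
  by (simp add: bcoeff_def)
lemma bcoeff_C: "bcoeff ([:[:c:]:] * R) i j = c * bcoeff R i j"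
  by (simp add: bcoeff_def)
lemma bcoeff_smult: "bcoeff (smult [:c:] R) i j = c * bcoeff R i j"
  by (simp add: bcoeff_def)
lemma bcoeff_sum: "bcoeff (sum g A) i j = (\<Sum>a\<in>A. bcoeff (g a) i j)"
  by (simp add: bcoeff_def coeff_sum)
lemma bcoeff_eqI: "(\<And>i j. bcoeff R i j = bcoeff S i j) \<Longrightarrow> R = S"
  unfolding bcoeff_def by (intro poly_eqI) auto

lemma Xb_pow: "Xb ^ i = [:monom 1 i:]"
  by (simp add: Xb_def poly_const_pow monom_altdef)
lemma Yb_pow: "Yb ^ j = monom 1 j"
  by (simp add: Yb_def monom_altdef)

lemma bcoeff_mono: "bcoeff ([:[:c:]:] * (Xb ^ i * Yb ^ j)) a b = (if a = i \<and> b = j then c else 0)"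
  by (simp add: bcoeff_def Xb_pow Yb_pow coeff_monom_mult coeff_monom)

lemma bcoeff_mono': "bcoeff (smult [:c:] (Xb ^ i * Yb ^ j)) a b = (if a = i \<and> b = j then c else 0)"
  using bcoeff_mono[of c i j a b] by simp

lemma ex_bnd: "\<exists>N. bnd R N"
proof -
  define N where "N = degree R + (\<Sum>j\<le>degree R. degree (coeff R j))"
  have "bnd R N" unfolding bnd_def
  proof (intro allI impI)
    fix i j assume h: "bcoeff R i j \<noteq> 0"
    then have cj: "coeff R j \<noteq> 0" by (auto simp: bcoeff_def)
    then have j: "j \<le> degree R" by (rule le_degree)
    have "i \<le> degree (coeff R j)" using h by (auto simp: bcoeff_def intro: le_degree)
    also have "\<dots> \<le> (\<Sum>j\<le>degree R. degree (coeff R j))"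
      using j by (intro member_le_sum) auto
    finally show "i \<le> N \<and> j \<le> N" using j by (simp add: N_def)
  qed
  then show ?thesis ..
qed

lemma bnd_mono: "bnd R N \<Longrightarrow> N \<le> M \<Longrightarrow> bnd R M"
  unfolding bnd_def by force

lemma sum_eq_nz:
  fixes f :: "'b \<Rightarrow> 'a::comm_monoid_add"
  assumes "finite A" "finite B" "\<forall>x\<in>A-B. f x = 0" "\<forall>x\<in>B-A. f x = 0"
  shows "sum f A = sum f B"
proof -
  have "sum f A = sum f (A \<union> B)"
    using assms by (intro sum.mono_neutral_left) auto
  also have "\<dots> = sum f B"
    using assms by (intro sum.mono_neutral_right) auto
  finally show ?thesis .
qed

lemma box_sum:
  fixes h :: "nat \<Rightarrow> nat \<Rightarrow> 'a::comm_monoid_add"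
  assumes hz: "\<And>i j. bcoeff P i j = 0 \<Longrightarrow> h i j = 0" and b: "bnd P N"
  shows "(\<Sum>j\<le>degree P. \<Sum>i\<le>degree (coeff P j). h i j) = (\<Sum>j\<le>N. \<Sum>i\<le>N. h i j)"
proof -
  have inner: "(\<Sum>i\<le>degree (coeff P j). h i j) = (\<Sum>i\<le>N. h i j)" for j
  proof (cases "coeff P j = 0")
    case True
    then have "\<And>i. h i j = 0" using hz by (simp add: bcoeff_def)
    then show ?thesis by simp
  next
    case False
    then have "bcoeff P (degree (coeff P j)) j \<noteq> 0" by (simp add: bcoeff_def)
    then have d: "degree (coeff P j) \<le> N" using b by (auto simp: bnd_def)
    show ?thesis
    proof (rule sum_eq_nz)
      show "\<forall>x\<in>{..degree (coeff P j)} - {..N}. h x j = 0" using d by auto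
      show "\<forall>x\<in>{..N} - {..degree (coeff P j)}. h x j = 0"
        using hz by (auto simp: bcoeff_def coeff_eq_0)
    qed auto
  qed
  have zero: "(\<Sum>i\<le>N. h i j) = 0" if "coeff P j = 0" for j
    using that hz by (simp add: bcoeff_def)
  have "(\<Sum>j\<le>degree P. \<Sum>i\<le>degree (coeff P j). h i j) = (\<Sum>j\<le>degree P. \<Sum>i\<le>N. h i j)"
    using inner by simp
  also have "\<dots> = (\<Sum>j\<le>N. \<Sum>i\<le>N. h i j)"
  proof (rule sum_eq_nz)
    show "\<forall>x\<in>{..degree P} - {..N}. (\<Sum>i\<le>N. h i x) = 0"
    proof
      fix x assume x: "x \<in> {..degree P} - {..N}"
      have "coeff P x = 0"
      proof (rule ccontr)
        assume "coeff P x \<noteq> 0"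
        then have "bcoeff P (degree (coeff P x)) x \<noteq> 0" by (simp add: bcoeff_def)
        then show False using b x by (auto simp: bnd_def)
      qed
      then show "(\<Sum>i\<le>N. h i x) = 0" by (rule zero)
    qed
    show "\<forall>x\<in>{..N} - {..degree P}. (\<Sum>i\<le>N. h i x) = 0"
      using zero by (auto simp: coeff_eq_0)
  qed auto
  finally show ?thesis .
qed

lemma sc_zero: "sc 0 z = 0"
  by (simp add: sc_def fun_eq_iff)
lemma sc_zero2: "sc c 0 = 0"
  by (simp add: sc_def fun_eq_iff)
lemma sc_add_c: "sc (c + d) z = sc c z + sc d z"
  by (simp add: sc_def fun_eq_iff distrib_right)
lemma sc_mult: "sc c (sc d z) = sc (c * d) z"
  by (simp add: sc_def fun_eq_iff)
lemma sc_neg_c: "sc (- c) z = - sc c z"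
  by (simp add: sc_def fun_eq_iff)
lemma sc_sum: "sc c (sum g A) = (\<Sum>a\<in>A. sc c (g a))"
proof (induction A rule: infinite_finite_induct)
  case (infinite A)
  then show ?case using sum.infinite[OF infinite] sc_zero2 by metis
next
  case empty
  then show ?case using sc_zero2 by (metis sum.empty)
next
  case (insert x F)
  then show ?case using sum.insert[OF insert(1,2)] sc_add by metis
qed

lemma delta1: "(\<Sum>i\<le>(N::nat). if a = i then f i j else (0::'a::comm_monoid_add)) = (if a \<le> N then f a j else 0)"
  using sum.delta'[of "{..N}" a "\<lambda>i. f i j"] by simp

lemma delta2: "(\<Sum>j\<le>(N::nat). \<Sum>i\<le>N. if a = i \<and> b = j then f i j else 0) = (if a \<le> N \<and> b \<le> N then f a b else (0::'a::comm_monoid_add))"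
proof -
  have "(\<Sum>i\<le>N. if a = i \<and> b = j then f i j else 0) = (if b = j then (if a \<le> N then f a j else 0) else 0)" for j
    using delta1[where N=N and a=a and f=f and j=j] by (cases "b = j") auto
  then show ?thesis by (simp add: sum.delta)
qed

lemma lP_box: "bnd R N \<Longrightarrow> lP R = (\<Sum>j\<le>N. \<Sum>i\<le>N. sc (bcoeff R i j) (BB i j))"
proof -
  assume b: "bnd R N"
  have "lP R = (\<Sum>j\<le>degree R. \<Sum>i\<le>degree (coeff R j). sc (bcoeff R i j) (BB i j))"
    unfolding lP_def sc_def BB_def ..
  also have "\<dots> = (\<Sum>j\<le>N. \<Sum>i\<le>N. sc (bcoeff R i j) (BB i j))"
    by (rule box_sum[OF _ b]) (simp add: sc_zero)
  finally show ?thesis .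
qed

definition blin :: "(bipoly \<Rightarrow> ncp) \<Rightarrow> bool" where
  "blin F \<longleftrightarrow> (\<forall>R S. F (R + S) = F R + F S) \<and> (\<forall>c R. F ([:[:c:]:] * R) = sc c (F R))"

lemma blin_zero: "blin F \<Longrightarrow> F 0 = 0"
  unfolding blin_def by (metis mult_zero_right sc_zero)

lemma blin_sum: "blin F \<Longrightarrow> F (sum g A) = (\<Sum>a\<in>A. F (g a))"
  by (induction A rule: infinite_finite_induct) (auto simp: blin_zero, simp add: blin_def)

lemma blin_add: "blin F \<Longrightarrow> F (R + S) = F R + F S"
  unfolding blin_def by blast
lemma blin_C: "blin F \<Longrightarrow> F ([:[:c:]:] * R) = sc c (F R)"
  unfolding blin_def by blast
lemma blin_minus: "blin F \<Longrightarrow> F (- R) = - F R"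
proof -
  assume F: "blin F"
  have "F (- R) + F R = 0" using blin_add[OF F, of "- R" R] blin_zero[OF F] by simp
  then show ?thesis by (simp add: eq_neg_iff_add_eq_0)
qed
lemma blin_diff: "blin F \<Longrightarrow> F (R - S) = F R - F S"
  using blin_add[of F R "- S"] blin_minus[of F S] by simp

lemma lP_blin: "blin lP"
  unfolding blin_def
proof (intro conjI allI)
  fix R S
  obtain N1 where 1: "bnd R N1" using ex_bnd by blast
  obtain N2 where 2: "bnd S N2" using ex_bnd by blast
  obtain N3 where 3: "bnd (R + S) N3" using ex_bnd by blast
  define N where "N = N1 + N2 + N3"
  have "bnd R N" "bnd S N" "bnd (R + S) N"
    using 1 2 3 by (auto intro: bnd_mono simp: N_def)
  then show "lP (R + S) = lP R + lP S"
    by (simp add: lP_box bcoeff_add sc_add_c sum.distrib)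
next
  fix c R
  obtain N1 where 1: "bnd R N1" using ex_bnd by blast
  obtain N3 where 3: "bnd ([:[:c:]:] * R) N3" using ex_bnd by blast
  define N where "N = N1 + N3"
  have "bnd R N" "bnd ([:[:c:]:] * R) N"
    using 1 3 by (auto intro: bnd_mono simp: N_def)
  then show "lP ([:[:c:]:] * R) = sc c (lP R)"
    by (simp add: lP_box bcoeff_smult sc_sum sc_mult)
qed

lemma expand: "bnd R N \<Longrightarrow> R = (\<Sum>j\<le>N. \<Sum>i\<le>N. [:[:bcoeff R i j:]:] * (Xb ^ i * Yb ^ j))"
proof (rule bcoeff_eqI)
  fix a b assume b: "bnd R N"
  have "bcoeff (\<Sum>j\<le>N. \<Sum>i\<le>N. [:[:bcoeff R i j:]:] * (Xb ^ i * Yb ^ j)) a b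
      = (\<Sum>j\<le>N. \<Sum>i\<le>N. if a = i \<and> b = j then bcoeff R i j else 0)"
    by (simp add: bcoeff_sum bcoeff_mono')
  also have "\<dots> = (if a \<le> N \<and> b \<le> N then bcoeff R a b else 0)"
    by (rule delta2)
  also have "\<dots> = bcoeff R a b" using b by (auto simp: bnd_def)
  finally show "bcoeff R a b = bcoeff (\<Sum>j\<le>N. \<Sum>i\<le>N. [:[:bcoeff R i j:]:] * (Xb ^ i * Yb ^ j)) a b" by simp
qed

lemma blin_ext: "blin F \<Longrightarrow> bnd R N \<Longrightarrow> F R = (\<Sum>j\<le>N. \<Sum>i\<le>N. sc (bcoeff R i j) (F (Xb ^ i * Yb ^ j)))"
  apply (subst expand, assumption)
  apply (simp only: blin_sum blin_C)
  done



lemma bcoeff_mono1: "bcoeff (Xb ^ i * Yb ^ j) a b = (if a = i \<and> b = j then 1 else 0)"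
  using bcoeff_mono[of 1 i j a b] by (simp add: pCons_one)

lemma lP_mono: "lP (Xb ^ i * Yb ^ j) = BB i j"
proof -
  have b: "bnd (Xb ^ i * Yb ^ j) (i + j)"
    unfolding bnd_def bcoeff_mono1 by auto
  have "lP (Xb ^ i * Yb ^ j) = (\<Sum>b\<le>i+j. \<Sum>a\<le>i+j. if i = a \<and> j = b then BB a b else 0)"
    unfolding lP_box[OF b] bcoeff_mono1 by (intro sum.cong refl) (auto simp: sc_def)
  also have "\<dots> = BB i j" by (simp only: delta2) simp
  finally show ?thesis .
qed

lemma bracket_gy_add: "bracket gy (a + b) = bracket gy a + bracket gy b"
  unfolding bracket_def by (simp add: ncmul_lin)
lemma bracket_gy_sc: "bracket gy (sc c a) = sc c (bracket gy a)"
  unfolding bracket_def by (simp add: ncmul_lin sc_diff)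

lemma blin_XY: "blin (\<lambda>R. lP ((Xb + Yb) * R))"
  unfolding blin_def
  by (simp add: distrib_left mult.left_commute[of _ "[:[:_:]:]"]
      blin_add[OF lP_blin] blin_C[OF lP_blin] del: mult_pCons_left)

lemma blin_adlP: "blin (\<lambda>R. bracket gy (lP R))"
  unfolding blin_def
  by (simp add: blin_add[OF lP_blin] blin_C[OF lP_blin] bracket_gy_add bracket_gy_sc del: mult_pCons_left)

lemma lP_XY: "lP ((Xb + Yb) * R) = bracket gy (lP R)"
proof -
  obtain N where b: "bnd R N" using ex_bnd by blast
  have m: "lP ((Xb + Yb) * (Xb ^ i * Yb ^ j)) = bracket gy (lP (Xb ^ i * Yb ^ j))" for i j
  proof -
    have "(Xb + Yb) * (Xb ^ i * Yb ^ j) = Xb ^ Suc i * Yb ^ j + Xb ^ i * Yb ^ Suc j"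
      by (simp add: algebra_simps)
    then show ?thesis
      by (simp only: blin_add[OF lP_blin] lP_mono ad_BB)
  qed
  show ?thesis
    using blin_ext[OF blin_XY b] blin_ext[OF blin_adlP b] m by simp
qed

lemma lP_negXY: "lP ((- Xb - Yb) * R) = Dop (lP R)"
proof -
  have "(- Xb - Yb) * R = - ((Xb + Yb) * R)" by (simp add: algebra_simps)
  then show ?thesis
    by (simp add: blin_minus[OF lP_blin] lP_XY Dop_def bracket_anti[of "lP R"])
qed

lemma lP_negXY_pow: "lP ((- Xb - Yb) ^ i * R) = (Dop ^^ i) (lP R)"
proof (induction i)
  case 0
  then show ?case by simp
next
  case (Suc i)
  have "(- Xb - Yb) ^ Suc i * R = (- Xb - Yb) * ((- Xb - Yb) ^ i * R)"
    by (simp add: mult.assoc)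
  then show ?case by (simp only: lP_negXY Suc.IH funpow.simps o_apply)
qed

definition DS :: "bipoly \<Rightarrow> (nat \<Rightarrow> nat \<Rightarrow> 'a::comm_monoid_add) \<Rightarrow> 'a" where
  "DS P h = (\<Sum>j\<le>degree P. \<Sum>i\<le>degree (coeff P j). h i j)"

lemma bsubst_expand:
  "bsubst P f g = DS P (\<lambda>i j. [:[:bcoeff P i j:]:] * (f ^ i * g ^ j))"
proof -
  have dm: "degree (map_poly (\<lambda>a. [:[:a:]:]) p) = degree p" for p :: "real poly"
    by (rule degree_map_poly) simp
  have "poly (map_poly (\<lambda>a. [:[:a:]:]) (coeff P j)) f * g ^ j =
      (\<Sum>i\<le>degree (coeff P j). [:[:bcoeff P i j:]:] * (f ^ i * g ^ j))" for j
    unfolding poly_altdef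
    by (simp add: dm coeff_map_poly sum_distrib_right bcoeff_def mult.assoc del: mult_pCons_left)
  then show ?thesis unfolding bsubst_def DS_def by simp
qed

lemma lP_bsubst: "lP (bsubst P f g) = DS P (\<lambda>i j. sc (bcoeff P i j) (lP (f ^ i * g ^ j)))"
  unfolding bsubst_expand DS_def
  by (simp only: blin_sum[OF lP_blin] blin_C[OF lP_blin])

lemma lP_DS: "lP P = DS P (\<lambda>i j. sc (bcoeff P i j) (BB i j))"
  unfolding lP_def DS_def sc_def BB_def ..

lemma DS_add: "DS P (\<lambda>i j. f i j + g i j) = DS P f + DS P g"
  unfolding DS_def by (simp add: sum.distrib)
lemma DS_diff: "DS P (\<lambda>i j. f i j - g i j) = DS P f - DS P (g :: nat \<Rightarrow> nat \<Rightarrow> 'a::ab_group_add)"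
  unfolding DS_def by (simp add: sum_subtractf)
lemma DS_minus: "DS P (\<lambda>i j. - f i j) = - DS P (f :: nat \<Rightarrow> nat \<Rightarrow> 'a::ab_group_add)"
  unfolding DS_def by (simp add: sum_negf)

lemma DS_box: "(\<And>i j. bcoeff P i j = 0 \<Longrightarrow> h i j = 0) \<Longrightarrow> bnd P N \<Longrightarrow> DS P h = (\<Sum>j\<le>N. \<Sum>i\<le>N. h i j)"
  unfolding DS_def by (rule box_sum)

lemma coeff_swap:
  assumes antisym: "bsubst P Yb Xb = - P"
  shows "bcoeff P b a = - bcoeff P a b"
proof -
  obtain N where b: "bnd P N" using ex_bnd by blast
  have "bcoeff (bsubst P Yb Xb) a b = DS P (\<lambda>i j. if b = i \<and> a = j then bcoeff P i j else 0)"
    unfolding bsubst_expand DS_def bcoeff_sum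
    by (intro sum.cong refl) (auto simp: mult.commute[of "Yb ^ _"] bcoeff_mono simp del: mult_pCons_left)
  also have "\<dots> = (\<Sum>j\<le>N. \<Sum>i\<le>N. if b = i \<and> a = j then bcoeff P i j else 0)"
    by (rule DS_box[OF _ b]) simp
  also have "\<dots> = (if b \<le> N \<and> a \<le> N then bcoeff P b a else 0)"
    by (rule delta2)
  also have "\<dots> = bcoeff P b a" using b by (auto simp: bnd_def)
  finally show ?thesis using antisym by (simp add: bcoeff_minus)
qed



lemma dx_tr_add: "dx_tr (a + b) = dx_tr a + dx_tr b"
  by (rule ext) (simp add: dx_tr_alt S2_add)
lemma dx_tr_sc: "dx_tr (sc c a) = sc c (dx_tr a)"
  by (rule ext) (simp add: dx_tr_alt sc_def S2_mult_left)
lemma kappa_add: "kappa (a + b) = kappa a + kappa b"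
  by (simp add: kappa_def ncmul_lin dx_tr_add)
lemma kappa_sc: "kappa (sc c a) = sc c (kappa a)"
  by (simp add: kappa_def ncmul_lin dx_tr_sc)
lemma kappa_zero: "kappa 0 = 0"
  using kappa_sc[of 0 0] by (simp add: sc_zero)
lemma kappa_sum: "kappa (sum g A) = (\<Sum>a\<in>A. kappa (g a))"
proof (induction A rule: infinite_finite_induct)
  case (infinite A)
  then show ?case using kappa_zero sum.infinite[OF infinite] by metis
next
  case empty
  then show ?case using kappa_zero by (metis sum.empty)
next
  case (insert x F)
  then show ?case using sum.insert[OF insert(1,2)] kappa_add by metis
qed

lemma DS_swap:
  assumes anti: "\<And>i j. bcoeff P j i = - bcoeff P i j"
  shows "DS P (\<lambda>i j. sc (bcoeff P i j) (E j i)) = - DS P (\<lambda>i j. sc (bcoeff P i j) (E i j))"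
proof -
  obtain N where b: "bnd P N" using ex_bnd by blast
  have "DS P (\<lambda>i j. sc (bcoeff P i j) (E j i)) = (\<Sum>j\<le>N. \<Sum>i\<le>N. sc (bcoeff P i j) (E j i))"
    by (rule DS_box[OF _ b]) (simp add: sc_zero)
  also have "\<dots> = (\<Sum>i\<le>N. \<Sum>j\<le>N. sc (bcoeff P i j) (E j i))"
    by (rule sum.swap)
  also have "\<dots> = (\<Sum>i\<le>N. \<Sum>j\<le>N. - sc (bcoeff P j i) (E j i))"
    by (intro sum.cong refl) (metis anti sc_neg_c)
  also have "\<dots> = - (\<Sum>j\<le>N. \<Sum>i\<le>N. sc (bcoeff P i j) (E i j))"
    by (simp add: sum_negf)
  also have "(\<Sum>j\<le>N. \<Sum>i\<le>N. sc (bcoeff P i j) (E i j)) = DS P (\<lambda>i j. sc (bcoeff P i j) (E i j))"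
    by (rule DS_box[OF _ b, symmetric]) (simp add: sc_zero)
  finally show ?thesis .
qed

theorem mainTheorem17:
  fixes P :: bipoly
  assumes antisym: "bsubst P Yb Xb = - P"
  shows "kappa (lP P) =
         lP (P - bsubst P (- Xb - Yb) Yb + bsubst P (- Xb - Yb) Xb)"
proof -
  define E where "E i j = (Dop ^^ i) (BB j 0)" for i j
  have anti: "\<And>i j. bcoeff P j i = - bcoeff P i j"
    using coeff_swap[OF antisym] by blast
  have L: "kappa (lP P) = DS P (\<lambda>i j. sc (bcoeff P i j) (BB i j))
      + DS P (\<lambda>i j. sc (bcoeff P i j) (E i j)) - DS P (\<lambda>i j. sc (bcoeff P i j) (E j i))"
  proof -
    have "kappa (lP P) = DS P (\<lambda>i j. sc (bcoeff P i j) (kappa (BB i j)))"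
      unfolding lP_DS DS_def by (simp only: kappa_sum kappa_sc)
    also have "\<dots> = DS P (\<lambda>i j. sc (bcoeff P i j) (BB i j) + sc (bcoeff P i j) (E i j) - sc (bcoeff P i j) (E j i))"
      by (simp only: kappa_BB E_def sc_add sc_diff)
    also have "\<dots> = DS P (\<lambda>i j. sc (bcoeff P i j) (BB i j))
      + DS P (\<lambda>i j. sc (bcoeff P i j) (E i j)) - DS P (\<lambda>i j. sc (bcoeff P i j) (E j i))"
      by (simp only: DS_add DS_diff)
    finally show ?thesis .
  qed
  have R1: "lP (bsubst P (- Xb - Yb) Yb) = - DS P (\<lambda>i j. sc (bcoeff P i j) (E i j))"
  proof -
    have "lP ((- Xb - Yb) ^ i * Yb ^ j) = - E i j" for i j
    proof -
      have y: "lP (Yb ^ j) = BB 0 j" using lP_mono[of 0 j] by simp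
      have "BB 0 j = - BB j 0" unfolding BB_def by (rule bracket_anti)
      then show ?thesis by (simp only: lP_negXY_pow y E_def Dpow_minus)
    qed
    then show ?thesis
      by (simp only: lP_bsubst sc_minus DS_minus)
  qed
  have R2: "lP (bsubst P (- Xb - Yb) Xb) = DS P (\<lambda>i j. sc (bcoeff P i j) (E i j))"
  proof -
    have "lP ((- Xb - Yb) ^ i * Xb ^ j) = E i j" for i j
    proof -
      have x: "lP (Xb ^ j) = BB j 0" using lP_mono[of j 0] by simp
      then show ?thesis by (simp only: lP_negXY_pow x E_def)
    qed
    then show ?thesis
      by (simp only: lP_bsubst)
  qed
  have "lP (P - bsubst P (- Xb - Yb) Yb + bsubst P (- Xb - Yb) Xb)
      = lP P - lP (bsubst P (- Xb - Yb) Yb) + lP (bsubst P (- Xb - Yb) Xb)"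
    by (simp only: blin_add[OF lP_blin] blin_diff[OF lP_blin])
  also have "\<dots> = lP P + DS P (\<lambda>i j. sc (bcoeff P i j) (E i j)) + DS P (\<lambda>i j. sc (bcoeff P i j) (E i j))"
    by (simp only: R1 R2 diff_minus_eq_add)
  also have "\<dots> = kappa (lP P)"
    by (simp only: L DS_swap[OF anti, of E] lP_DS[symmetric] diff_minus_eq_add)
  finally show ?thesis by (rule sym)
qed


end
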